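(* Suppose $\rho=(\rho_i)_{i=1}^I \in C(\mathbb{R}_+,\mathbb{R}_+)^I$, and let $\psi_i(u):=\int_0^u \rho_i(u')du'$. Then $\rho \in \mathcal{D}_{\mathrm{density}}$ if and only if $\psi \in \mathcal{D}^2$.
   Context: Fix $I\in\mathbb{N}$. $\mathcal{C}=\{f\in C(\mathbb{R}_+,\mathbb{R}_+):f(0)=0,f\text{ non-decreasing}\}$, $\mathcal{C}^\uparrow=\{f\in\mathcal{C}:f\text{ strictly increasing},\lim_{u\to\infty}f(u)=\infty\}$, $\mathcal{C}^q=\{f\in\mathcal{C}:f^{\mathbb{R}}\in C^q(\mathbb{R},\mathbb{R})\}$ where $f^{\mathbb{R}}$ extends $f$ by $0$ on $(-\infty,0)$. For $\psi\in\mathcal{C}^I$, $\phi_i(u)=u-\sum_{j=1}^I2(i\wedge j)\psi_j(u)$. $\mathcal{D}=\{\psi\in\mathcal{C}^I:\phi_I\in\mathcal{C}^\uparrow,\sum_ii\sup_{u_1\neq u_2}\frac{\psi_i(u_1)-\psi_i(u_2)}{\phi_i(u_1)-\phi_i(u_2)}<\frac12\}$, $\mathcal{D}^2=\mathcal{D}\cap(\mathcal{C}^2)^I$. $\mathcal{C}^1(\mathbb{R}_+,\mathbb{R}_+)$: functions $f:\mathbb{R}_+\to\mathbb{R}_+$ whose extension by $0$ on $(-\infty,0)$ is $C^1$ on $\mathbb{R}$. $\mathcal{D}_{\mathrm{density}}$: the set of $\rho\in\mathcal{C}^1(\mathbb{R}_+,\mathbb{R}_+)^I$ with $\sum_{i=1}^I2i\rho_i(u)<1$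 for all $u\ge0$ and $\sum_{i=1}^Ii\sup_u\frac{\rho_i(u)}{1-\sum_{j=1}^I2(i\wedge j)\rho_j(u)}<\frac12$. *)

theory Defs
  imports "HOL-Analysis.Analysis"
begin

definition ext0 :: "(real \<Rightarrow> real) \<Rightarrow> real \<Rightarrow> real" where
  "ext0 f = (\<lambda>x. if x < 0 then 0 else f x)"

fun Ck :: "nat \<Rightarrow> (real \<Rightarrow> real) \<Rightarrow> bool" where
  "Ck 0 f = continuous_on UNIV f"
| "Ck (Suc k) f = ((\<forall>x. f differentiable (at x)) \<and> Ck k (deriv f))"

definition in_C :: "(real \<Rightarrow> real) \<Rightarrow> bool" where
  "in_C f \<longleftrightarrow> continuous_on {0..} f \<and> (\<forall>u\<ge>0. f u \<ge> 0) \<and> f 0 = 0 \<and> mono_on {0..} f"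

definition in_C_up :: "(real \<Rightarrow> real) \<Rightarrow> bool" where
  "in_C_up f \<longleftrightarrow> in_C f \<and> strict_mono_on {0..} f \<and> filterlim f at_top at_top"

definition in_Cq :: "nat \<Rightarrow> (real \<Rightarrow> real) \<Rightarrow> bool" where
  "in_Cq q f \<longleftrightarrow> in_C f \<and> Ck q (ext0 f)"

definition phi :: "nat \<Rightarrow> (nat \<Rightarrow> real \<Rightarrow> real) \<Rightarrow> nat \<Rightarrow> real \<Rightarrow> real" where
  "phi I \<psi> i u = u - (\<Sum>j=1..I. 2 * real (min i j) * \<psi> j u)"

definition in_D :: "nat \<Rightarrow> (nat \<Rightarrow> real \<Rightarrow> real) \<Rightarrow> bool" where
  "in_D I \<psi> \<longleftrightarrow> (\<forall>i\<in>{1..I}. in_C (\<psi> i)) \<and> in_C_up (phi I \<psi> I) \<and>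
     (\<Sum>i=1..I. ereal (real i) *
        (SUP p\<in>{(u1,u2). u1 \<ge> 0 \<and> u2 \<ge> 0 \<and> u1 \<noteq> u2}.
           ereal ((\<psi> i (fst p) - \<psi> i (snd p)) / (phi I \<psi> i (fst p) - phi I \<psi> i (snd p)))))
     < ereal (1/2)"

definition in_D2 :: "nat \<Rightarrow> (nat \<Rightarrow> real \<Rightarrow> real) \<Rightarrow> bool" where
  "in_D2 I \<psi> \<longleftrightarrow> in_D I \<psi> \<and> (\<forall>i\<in>{1..I}. in_Cq 2 (\<psi> i))"

definition in_C1_plus :: "(real \<Rightarrow> real) \<Rightarrow> bool" where
  "in_C1_plus f \<longleftrightarrow> (\<forall>u\<ge>0. f u \<ge> 0) \<and> Ck 1 (ext0 f)"

definition in_D_density :: "nat \<Rightarrow> (nat \<Rightarrow> real \<Rightarrow> real) \<Rightarrow> bool" where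
  "in_D_density I \<rho> \<longleftrightarrow> (\<forall>i\<in>{1..I}. in_C1_plus (\<rho> i)) \<and>
     (\<forall>u\<ge>0. (\<Sum>i=1..I. 2 * real i * \<rho> i u) < 1) \<and>
     (\<Sum>i=1..I. ereal (real i) *
        (SUP u\<in>{0::real..}.
           ereal (\<rho> i u / (1 - (\<Sum>j=1..I. 2 * real (min i j) * \<rho> j u)))))
     < ereal (1/2)"

end

theory Submission imports Defs begin


lemma psi_deriv:
  assumes "continuous_on {0..} g" "(x::real) \<ge> 0"
  shows "((\<lambda>u. integral {0..u} g) has_real_derivative g x) (at x within {0..})"
proof -
  have "((\<lambda>u. integral {0..u} g) has_real_derivative g x) (at x within {0..x+1})"
    by (rule integral_has_real_derivative) (use assms in \<open>auto intro: continuous_on_subset\<close>)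
  moreover have "at x within {0..x+1} = at x within {0..}"
    by (rule at_within_nhd[where S="{x-1<..<x+1}"]) auto
  ultimately show ?thesis by simp
qed

lemma deriv_within_at:
  assumes "(f has_real_derivative D) (at x within {0..})" "(x::real) > 0"
  shows "(f has_real_derivative D) (at x)"
  using assms at_within_interior[of x "{0..}"] by simp

lemma cont_from_deriv:
  assumes "\<forall>x\<ge>0. (f has_real_derivative f' x) (at x within {0..})"
  shows "continuous_on {0..} f"
  using assms by (auto simp: continuous_on_eq_continuous_within intro: DERIV_continuous)

lemma incr0:
  assumes "\<forall>x\<ge>0. (f has_real_derivative f' x) (at x within {0..})" "\<forall>x\<ge>0. f' x \<ge> 0"
    "0 \<le> a" "a \<le> (b::real)"
  shows "f a \<le> f b"
proof (rule DERIV_nonneg_imp_increasing_open[OF assms(4)])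
  show "continuous_on {a..b} f"
    by (rule continuous_on_subset[OF cont_from_deriv[OF assms(1)]]) (use assms(3) in auto)
  fix x assume "a < x" "x < b"
  then show "\<exists>y. (f has_real_derivative y) (at x) \<and> 0 \<le> y"
    using assms deriv_within_at[of f "f' x" x] by auto
qed

lemma sincr0:
  assumes "\<forall>x\<ge>0. (f has_real_derivative f' x) (at x within {0..})" "\<forall>x\<ge>0. f' x > 0"
    "0 \<le> a" "a < (b::real)"
  shows "f a < f b"
proof (rule DERIV_pos_imp_increasing_open[OF assms(4)])
  show "continuous_on {a..b} f"
    by (rule continuous_on_subset[OF cont_from_deriv[OF assms(1)]]) (use assms(3) in auto)
  fix x assume "a < x" "x < b"
  then show "\<exists>y. (f has_real_derivative y) (at x) \<and> 0 < y"
    using assms deriv_within_at[of f "f' x" x] by auto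
qed



lemma ext0_cont:
  assumes g: "continuous_on {0..} g" and g0: "g 0 = 0"
  shows "continuous_on UNIV (ext0 g)"
proof -
  have e: "ext0 g = (\<lambda>x. if x \<le> 0 then (\<lambda>_. 0) x else g x)"
    using g0 by (auto simp: ext0_def fun_eq_iff)
  have "continuous_on UNIV (\<lambda>x. if id x \<le> (0::real) then (\<lambda>_. 0::real) x else g x)"
    by (rule continuous_on_cases_le) (use g0 g in \<open>auto simp: atLeast_def\<close>)
  then show ?thesis using e by simp
qed

lemma ext0_deriv:
  assumes g: "continuous_on {0..} g" and g0: "g 0 = 0"
  shows "(ext0 (\<lambda>u. integral {0..u} g) has_real_derivative ext0 g x) (at x)"
proof -
  define a where "a = min x 0 - 1"
  have hc: "continuous_on UNIV (ext0 g)" by (rule ext0_cont[OF g g0])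
  have "((\<lambda>y. integral {a..y} (ext0 g)) has_real_derivative ext0 g x) (at x within {a..x+1})"
    by (rule integral_has_real_derivative) (use hc a_def in \<open>auto intro: continuous_on_subset\<close>)
  moreover have "at x within {a..x+1} = at x" by (rule at_within_Icc_at) (auto simp: a_def)
  ultimately have d: "((\<lambda>y. integral {a..y} (ext0 g)) has_real_derivative ext0 g x) (at x)" by simp
  show ?thesis
  proof (rule has_field_derivative_transform_within_open[OF d, of "{a<..}"])
    show "x \<in> {a<..}" by (auto simp: a_def)
    fix y assume y: "y \<in> {a<..}"
    show "integral {a..y} (ext0 g) = ext0 (\<lambda>u. integral {0..u} g) y"
    proof (cases "y < 0")
      case True
      have "integral {a..y} (ext0 g) = integral {a..y} (\<lambda>_. 0::real)"
        by (rule integral_cong) (use True in \<open>auto simp: ext0_def\<close>)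
      then show ?thesis using True by (simp add: ext0_def)
    next
      case False
      have "integral {a..0} (ext0 g) + integral {0..y} (ext0 g) = integral {a..y} (ext0 g)"
        by (rule Henstock_Kurzweil_Integration.integral_combine)
           (use False a_def in \<open>auto intro!: integrable_continuous_interval intro: continuous_on_subset[OF hc]\<close>)
      moreover have "integral {a..0} (ext0 g) = integral {a..0} (\<lambda>_. 0::real)"
        by (rule integral_cong) (use g0 in \<open>auto simp: ext0_def\<close>)
      moreover have "integral {0..y} (ext0 g) = integral {0..y} g"
        by (rule integral_cong) (auto simp: ext0_def)
      ultimately show ?thesis using False by (simp add: ext0_def)
    qed
  qed simp
qed

lemma ext0_diff0:
  assumes g: "continuous_on {0..} g" and d: "ext0 (\<lambda>u. integral {0..u} g) differentiable (at 0)"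
  shows "g 0 = 0"
proof -
  let ?E = "ext0 (\<lambda>u. integral {0..u} g)"
  obtain D where D: "(?E has_real_derivative D) (at 0)" using d real_differentiable_def by blast
  have "((\<lambda>u. integral {0..u} g) has_real_derivative g 0) (at 0 within {0..1})"
    by (rule integral_has_real_derivative) (use g in \<open>auto intro: continuous_on_subset\<close>)
  then have A: "(?E has_real_derivative g 0) (at 0 within {0..1})"
    by (rule has_field_derivative_transform_within[where d=1]) (auto simp: ext0_def)
  have B: "(?E has_real_derivative D) (at 0 within {0..1})"
    using D by (rule has_field_derivative_subset) simp
  have 1: "D = g 0"
    using vector_derivative_unique_within_closed_interval[of 0 1 0 ?E D "g 0"] A B
    by (simp add: has_real_derivative_iff_has_vector_derivative)
  have "((\<lambda>_. 0) has_real_derivative 0) (at 0 within {-1..0})" by simp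
  then have A2: "(?E has_real_derivative 0) (at 0 within {-1..0})"
    by (rule has_field_derivative_transform_within[where d=1]) (auto simp: ext0_def)
  have B2: "(?E has_real_derivative D) (at 0 within {-1..0})"
    using D by (rule has_field_derivative_subset) simp
  have "D = 0"
    using vector_derivative_unique_within_closed_interval[of "-1" 0 0 ?E D 0] A2 B2
    by (simp add: has_real_derivative_iff_has_vector_derivative)
  with 1 show ?thesis by simp
qed

lemma Ck2_eq: "Ck 2 f \<longleftrightarrow> (\<forall>x. f differentiable (at x)) \<and> Ck 1 (deriv f)"
  unfolding Suc_1[symmetric] by (rule Ck.simps(2))

lemma ext0_cont0:
  assumes "isCont (ext0 g) 0"
  shows "g 0 = 0"
proof -
  have "(ext0 g \<longlongrightarrow> ext0 g 0) (at_left 0)"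
    using assms filterlim_at_split unfolding isCont_def by blast
  moreover have "(ext0 g \<longlongrightarrow> 0) (at_left 0)"
  proof -
    have "eventually (\<lambda>x. (0::real) = ext0 g x) (at_left 0)"
      using eventually_at_left_real[of "-1" 0] by (rule eventually_mono) (auto simp: ext0_def)
    then show ?thesis using tendsto_cong[of "\<lambda>_. 0" "ext0 g" "at_left (0::real)" 0] by simp
  qed
  ultimately have "ext0 g 0 = 0" using tendsto_unique[OF trivial_limit_at_left_real] by blast
  then show ?thesis by (simp add: ext0_def)
qed

lemma Ck_iff:
  assumes g: "continuous_on {0..} g"
  shows "Ck 2 (ext0 (\<lambda>u. integral {0..u} g)) \<longleftrightarrow> Ck 1 (ext0 g)"
proof
  assume c: "Ck 2 (ext0 (\<lambda>u. integral {0..u} g))"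
  then have g0: "g 0 = 0" using ext0_diff0[OF g] Ck2_eq by blast
  have "deriv (ext0 (\<lambda>u. integral {0..u} g)) = ext0 g"
    using ext0_deriv[OF g g0] DERIV_imp_deriv by blast
  then show "Ck 1 (ext0 g)" using c Ck2_eq by metis
next
  assume c: "Ck 1 (ext0 g)"
  then have "isCont (ext0 g) 0" by (simp add: differentiable_imp_continuous_within)
  then have g0: "g 0 = 0" by (rule ext0_cont0)
  have "deriv (ext0 (\<lambda>u. integral {0..u} g)) = ext0 g"
    using ext0_deriv[OF g g0] DERIV_imp_deriv by blast
  then show "Ck 2 (ext0 (\<lambda>u. integral {0..u} g))"
    using c Ck2_eq ext0_deriv[OF g g0] real_differentiable_def by metis
qed


lemma extract_c:
  fixes S :: "nat \<Rightarrow> ereal"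
  assumes nn: "\<forall>i\<in>{1..I}. S i \<ge> 0" and lt: "(\<Sum>i=1..I. ereal (real i) * S i) < ereal (1/2)"
  shows "\<exists>c. (\<forall>i\<in>{1..I}. S i = ereal (c i) \<and> c i \<ge> 0) \<and> (\<Sum>i=1..I. real i * c i) < 1/2"
proof -
  define c where "c i = real_of_ereal (S i)" for i
  have fin: "S i = ereal (c i)" if i: "i \<in> {1..I}" for i
  proof -
    have "ereal (real i) * S i \<le> (\<Sum>i=1..I. ereal (real i) * S i)"
    proof -
      have "(\<Sum>i=1..I. ereal (real i) * S i) = ereal (real i) * S i + (\<Sum>j\<in>{1..I}-{i}. ereal (real j) * S j)"
        by (rule sum.remove) (use i in auto)
      moreover have "0 \<le> (\<Sum>j\<in>{1..I}-{i}. ereal (real j) * S j)"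
        by (rule sum_nonneg) (use nn in \<open>auto intro!: mult_nonneg_nonneg\<close>)
      ultimately show ?thesis by (metis ereal_le_add_self)
    qed
    then have lt2: "ereal (real i) * S i < ereal (1/2)" using lt by (rule le_less_trans)
    have "real i > 0" using i by auto
    have "S i \<noteq> \<infinity>"
    proof
      assume "S i = \<infinity>"
      then have "ereal (real i) * S i = \<infinity>" using \<open>real i > 0\<close> by simp
      then show False using lt2 by simp
    qed
    moreover have "S i \<noteq> -\<infinity>" using nn i by auto
    ultimately show ?thesis unfolding c_def by (cases "S i") auto
  qed
  have "(\<Sum>i=1..I. ereal (real i) * S i) = (\<Sum>i=1..I. ereal (real i * c i))"
    by (rule sum.cong) (auto simp: fin)
  also have "\<dots> = ereal (\<Sum>i=1..I. real i * c i)" by (rule sum_ereal)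
  finally have "(\<Sum>i=1..I. real i * c i) < 1/2" using lt by simp
  moreover have "\<forall>i\<in>{1..I}. S i = ereal (c i) \<and> c i \<ge> 0"
    using fin nn by (metis ereal_less_eq(5))
  ultimately show ?thesis by blast
qed

lemma ratio_le:
  fixes P Q :: "real \<Rightarrow> real"
  assumes "\<And>u1 u2. 0 \<le> u2 \<Longrightarrow> u2 < u1 \<Longrightarrow> P u1 - P u2 > 0 \<and> Q u1 - Q u2 \<le> c * (P u1 - P u2)"
    "u1 \<ge> 0" "u2 \<ge> 0" "u1 \<noteq> u2"
  shows "(Q u1 - Q u2) / (P u1 - P u2) \<le> c"
proof (cases "u2 < u1")
  case True
  then show ?thesis using assms(1)[of u2 u1] assms by (simp add: pos_divide_le_eq)
next
  case False
  then have "u1 < u2" using assms by auto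
  moreover have "(Q u1 - Q u2) / (P u1 - P u2) = (Q u2 - Q u1) / (P u2 - P u1)"
    by (metis minus_diff_eq minus_divide_divide)
  ultimately show ?thesis using assms(1)[of u1 u2] assms by (simp add: pos_divide_le_eq)
qed

lemma mono_deriv_nonneg:
  fixes H :: "real \<Rightarrow> real"
  assumes "(H has_real_derivative L) (at x)" "x > 0"
    "\<And>a b. 0 \<le> a \<Longrightarrow> a < b \<Longrightarrow> H a \<le> H b"
  shows "L \<ge> 0"
proof (rule ccontr)
  assume "\<not> L \<ge> 0"
  then obtain dd where "dd > 0" "\<forall>h>0. h < dd \<longrightarrow> H x > H (x + h)"
    using DERIV_neg_dec_right[OF assms(1)] by force
  then have "H x > H (x + dd/2)" by auto
  moreover have "H x \<le> H (x + dd/2)" using assms(2,3) \<open>dd > 0\<close> by auto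
  ultimately show False by simp
qed


theorem lemma6p5:
  fixes I :: nat and \<rho> :: "nat \<Rightarrow> real \<Rightarrow> real"
  assumes "\<forall>i\<in>{1..I}. continuous_on {0..} (\<rho> i) \<and> (\<forall>u\<ge>0. \<rho> i u \<ge> 0)"
  shows "in_D_density I \<rho> \<longleftrightarrow> in_D2 I (\<lambda>i u. integral {0..u} (\<rho> i))"
proof -
  define \<psi> where "\<psi> = (\<lambda>i u. integral {0..u} (\<rho> i))"
  define d where "d = (\<lambda>i u. 1 - (\<Sum>j=1..I. 2 * real (min i j) * \<rho> j u))"
  have cont: "continuous_on {0..} (\<rho> i)" if "i \<in> {1..I}" for i using assms that by blast
  have nn: "\<rho> i u \<ge> 0" if "i \<in> {1..I}" "u \<ge> 0" for i u using assms that by blast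
  have Dpsi: "\<forall>x\<ge>0. (\<psi> i has_real_derivative \<rho> i x) (at x within {0..})" if "i \<in> {1..I}" for i
    unfolding \<psi>_def using psi_deriv[OF cont[OF that]] by blast
  have phi_eq: "phi I \<psi> i = (\<lambda>u. u - (\<Sum>j=1..I. 2 * real (min i j) * \<psi> j u))" for i
    by (simp add: phi_def fun_eq_iff)
  have Dphi: "\<forall>x\<ge>0. (phi I \<psi> i has_real_derivative d i x) (at x within {0..})" for i
  proof (intro allI impI)
    fix x :: real assume x: "x \<ge> 0"
    have "((\<lambda>u. u - (\<Sum>j=1..I. 2 * real (min i j) * \<psi> j u)) has_real_derivative
           1 - (\<Sum>j=1..I. 2 * real (min i j) * \<rho> j x)) (at x within {0..})"
      by (intro DERIV_diff DERIV_ident DERIV_sum DERIV_cmult) (use Dpsi x in auto)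
    then show "(phi I \<psi> i has_real_derivative d i x) (at x within {0..})"
      by (simp add: phi_eq d_def)
  qed
  have psi0: "\<psi> i 0 = 0" for i by (simp add: \<psi>_def)
  have psi_mono: "\<psi> i a \<le> \<psi> i b" if "i \<in> {1..I}" "0 \<le> a" "a \<le> b" for i a b
    by (rule incr0[OF Dpsi[OF that(1)]]) (use nn that in auto)
  have psiC: "in_C (\<psi> i)" if "i \<in> {1..I}" for i
    unfolding in_C_def
    using cont_from_deriv[OF Dpsi[OF that]] psi0[of i] psi_mono[OF that, of 0] psi_mono[OF that]
    by (auto intro!: mono_onI)
  have dI: "d I u = 1 - (\<Sum>j=1..I. 2 * real j * \<rho> j u)" for u
    unfolding d_def by (intro arg_cong[where f="\<lambda>x. 1 - x"] sum.cong) auto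
  have d_le: "d I u \<le> d i u" if "i \<le> I" "u \<ge> 0" for i u
    unfolding d_def using that
    by (auto intro!: sum_mono mult_right_mono nn)
  have phi_diff: "phi I \<psi> I b - phi I \<psi> I a \<le> phi I \<psi> i b - phi I \<psi> i a"
    if "i \<le> I" "0 \<le> a" "a \<le> b" for i a b
  proof -
    have "(\<lambda>u. phi I \<psi> i u - phi I \<psi> I u) a \<le> (\<lambda>u. phi I \<psi> i u - phi I \<psi> I u) b"
      by (rule incr0[where f'="\<lambda>u. d i u - d I u"])
         (use Dphi d_le that in \<open>auto intro!: DERIV_diff\<close>)
    then show ?thesis by simp
  qed
  have key: "1 - 2 * (\<Sum>i=1..I. real i * c i) \<le> d I u"
    if c0: "\<forall>i\<in>{1..I}. c i \<ge> 0" and u: "u \<ge> 0"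
      and le: "\<forall>i\<in>{1..I}. \<rho> i u \<le> c i * d i u" for c u
  proof -
    have "d i u \<le> 1" if "i \<in> {1..I}" for i
      unfolding d_def using u by (auto intro!: sum_nonneg mult_nonneg_nonneg nn)
    then have "\<rho> i u \<le> c i" if "i \<in> {1..I}" for i
      using le c0 that by (metis mult_left_le order_trans)
    then have "(\<Sum>j=1..I. 2 * real j * \<rho> j u) \<le> (\<Sum>j=1..I. 2 * (real j * c j))"
      by (intro sum_mono) auto
    then show ?thesis unfolding dI by (simp add: sum_distrib_left)
  qed
  show ?thesis
  proof
    assume dens: "in_D_density I \<rho>"
    define S where "S i = (SUP u\<in>{0::real..}. ereal (\<rho> i u / d i u))" for i
    have C1: "\<forall>i\<in>{1..I}. in_C1_plus (\<rho> i)" and lt1: "\<forall>u\<ge>0. (\<Sum>i=1..I. 2 * real i * \<rho> i u) < 1"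
      using dens unfolding in_D_density_def by blast+
    have sumS: "(\<Sum>i=1..I. ereal (real i) * S i) < ereal (1/2)"
      using dens unfolding in_D_density_def S_def d_def by blast
    have dpos: "d I u > 0" if "u \<ge> 0" for u using lt1 that dI by auto
    have dipos: "d i u > 0" if "i \<in> {1..I}" "u \<ge> 0" for i u
      using dpos[OF that(2)] d_le[of i u] that by force
    have Snn: "\<forall>i\<in>{1..I}. S i \<ge> 0"
    proof
      fix i assume i: "i \<in> {1..I}"
      have "ereal 0 \<le> ereal (\<rho> i 0 / d i 0)" using nn[OF i, of 0] dipos[OF i, of 0] by simp
      also have "\<dots> \<le> S i" unfolding S_def by (rule SUP_upper) auto
      finally show "S i \<ge> 0" by (simp add: zero_ereal_def)
    qed
    obtain c where c: "\<forall>i\<in>{1..I}. S i = ereal (c i) \<and> c i \<ge> 0" and csum: "(\<Sum>i=1..I. real i * c i) < 1/2"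
      using extract_c[OF Snn sumS] by blast
    have cbound: "\<rho> i u \<le> c i * d i u" if i: "i \<in> {1..I}" and u: "u \<ge> 0" for i u
    proof -
      have "ereal (\<rho> i u / d i u) \<le> S i" unfolding S_def by (rule SUP_upper) (use u in auto)
      then have "\<rho> i u / d i u \<le> c i" using c i by simp
      then show ?thesis using dipos[OF i u] by (simp add: pos_divide_le_eq mult.commute)
    qed
    define \<delta> where "\<delta> = 1 - 2 * (\<Sum>i=1..I. real i * c i)"
    have \<delta>pos: "\<delta> > 0" using csum \<delta>_def by simp
    have d\<delta>: "\<delta> \<le> d I u" if "u \<ge> 0" for u
      unfolding \<delta>_def by (rule key) (use c cbound that in auto)
    have smono: "phi I \<psi> I a < phi I \<psi> I b" if "0 \<le> a" "a < b" for a b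
      by (rule sincr0[OF Dphi]) (use dpos that in auto)
    have phi0: "phi I \<psi> i 0 = 0" for i by (simp add: phi_def psi0)
    have lower: "\<delta> * u \<le> phi I \<psi> I u" if "u \<ge> 0" for u
    proof -
      have "(\<lambda>u. phi I \<psi> I u - \<delta> * u) 0 \<le> (\<lambda>u. phi I \<psi> I u - \<delta> * u) u"
        by (rule incr0[where f'="\<lambda>u. d I u - \<delta>"])
           (use Dphi d\<delta> that in \<open>auto intro!: derivative_eq_intros\<close>)
      then show ?thesis using phi0 by simp
    qed
    have upI: "in_C_up (phi I \<psi> I)"
      unfolding in_C_up_def in_C_def
    proof (intro conjI)
      show "continuous_on {0..} (phi I \<psi> I)" by (rule cont_from_deriv[OF Dphi])
      show "\<forall>u\<ge>0. 0 \<le> phi I \<psi> I u" using lower \<delta>pos by (meson mult_nonneg_nonneg less_imp_le order_trans)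
      show "phi I \<psi> I 0 = 0" by (rule phi0)
      show "mono_on {0..} (phi I \<psi> I)" by (rule mono_onI) (use smono in \<open>force simp: le_less\<close>)
      show "strict_mono_on {0..} (phi I \<psi> I)" by (rule strict_mono_onI) (use smono in auto)
      have "filterlim (\<lambda>u. \<delta> * u) at_top at_top"
        by (rule filterlim_tendsto_pos_mult_at_top[OF tendsto_const \<delta>pos filterlim_ident])
      then show "filterlim (phi I \<psi> I) at_top at_top"
        by (rule filterlim_at_top_mono) (use lower in \<open>auto intro: eventually_mono[OF eventually_ge_at_top[of 0]]\<close>)
    qed
    define T where "T i = (SUP p\<in>{(u1,u2). u1 \<ge> 0 \<and> u2 \<ge> 0 \<and> u1 \<noteq> u2}.
           ereal ((\<psi> i (fst p) - \<psi> i (snd p)) / (phi I \<psi> i (fst p) - phi I \<psi> i (snd p))))" for i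
    have Tle: "T i \<le> ereal (c i)" if i: "i \<in> {1..I}" for i
      unfolding T_def
    proof (rule SUP_least)
      fix p assume "p \<in> {(u1,u2). u1 \<ge> 0 \<and> u2 \<ge> 0 \<and> u1 \<noteq> (u2::real)}"
      then obtain u1 u2 where p: "p = (u1, u2)" "u1 \<ge> 0" "u2 \<ge> 0" "u1 \<noteq> u2" by auto
      have "(\<psi> i u1 - \<psi> i u2) / (phi I \<psi> i u1 - phi I \<psi> i u2) \<le> c i"
      proof (rule ratio_le[OF _ p(2-4)])
        fix a b :: real assume ab: "0 \<le> a" "a < b"
        have "i \<le> I" using i by auto
        show "phi I \<psi> i b - phi I \<psi> i a > 0 \<and> \<psi> i b - \<psi> i a \<le> c i * (phi I \<psi> i b - phi I \<psi> i a)"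
        proof
          show "phi I \<psi> i b - phi I \<psi> i a > 0"
            using phi_diff[OF \<open>i \<le> I\<close> ab(1) less_imp_le[OF ab(2)]] smono[OF ab] by linarith
          have "(\<lambda>u. c i * phi I \<psi> i u - \<psi> i u) a \<le> (\<lambda>u. c i * phi I \<psi> i u - \<psi> i u) b"
            by (rule incr0[where f'="\<lambda>u. c i * d i u - \<rho> i u"])
               (use Dphi Dpsi[OF i] cbound[OF i] ab in \<open>auto intro!: DERIV_diff DERIV_cmult\<close>)
          then show "\<psi> i b - \<psi> i a \<le> c i * (phi I \<psi> i b - phi I \<psi> i a)" by (simp add: algebra_simps)
        qed
      qed
      then show "ereal ((\<psi> i (fst p) - \<psi> i (snd p)) / (phi I \<psi> i (fst p) - phi I \<psi> i (snd p))) \<le> ereal (c i)"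
        using p by simp
    qed
    have "(\<Sum>i=1..I. ereal (real i) * T i) \<le> (\<Sum>i=1..I. ereal (real i) * ereal (c i))"
    proof (rule sum_mono)
      fix i assume i: "i \<in> {1..I}"
      show "ereal (real i) * T i \<le> ereal (real i) * ereal (c i)"
        by (rule ereal_mult_left_mono[OF Tle[OF i]]) simp
    qed
    also have "\<dots> = (\<Sum>i=1..I. ereal (real i * c i))" by simp
    also have "\<dots> = ereal (\<Sum>i=1..I. real i * c i)" by (rule sum_ereal)
    also have "\<dots> < ereal (1/2)" using csum by simp
    finally have sumT: "(\<Sum>i=1..I. ereal (real i) * T i) < ereal (1/2)" .
    have "in_D2 I \<psi>"
      unfolding in_D2_def in_D_def in_Cq_def
    proof (intro conjI ballI)
      show "(\<Sum>i=1..I. ereal (real i) * (SUP p\<in>{(u1,u2). u1 \<ge> 0 \<and> u2 \<ge> 0 \<and> u1 \<noteq> u2}.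
           ereal ((\<psi> i (fst p) - \<psi> i (snd p)) / (phi I \<psi> i (fst p) - phi I \<psi> i (snd p))))) < ereal (1/2)"
        using sumT unfolding T_def .
      fix i assume i: "i \<in> {1..I}"
      show "in_C (\<psi> i)" by (rule psiC[OF i])
      show "in_C (\<psi> i)" by (rule psiC[OF i])
      show "Ck 2 (ext0 (\<psi> i))" unfolding \<psi>_def
        using Ck_iff[OF cont[OF i]] C1 i unfolding in_C1_plus_def by blast
    qed (rule upI)
    then show "in_D2 I (\<lambda>i u. integral {0..u} (\<rho> i))" unfolding \<psi>_def .

  next
    assume D2: "in_D2 I (\<lambda>i u. integral {0..u} (\<rho> i))"
    have D2': "in_D2 I \<psi>" using D2 unfolding \<psi>_def .
    define T where "T i = (SUP p\<in>{(u1,u2). u1 \<ge> 0 \<and> u2 \<ge> 0 \<and> u1 \<noteq> u2}.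
           ereal ((\<psi> i (fst p) - \<psi> i (snd p)) / (phi I \<psi> i (fst p) - phi I \<psi> i (snd p))))" for i
    have upI: "in_C_up (phi I \<psi> I)" and sumT: "(\<Sum>i=1..I. ereal (real i) * T i) < ereal (1/2)"
      and Cq: "\<forall>i\<in>{1..I}. in_Cq 2 (\<psi> i)"
      using D2' unfolding in_D2_def in_D_def T_def by blast+
    have smono: "phi I \<psi> I a < phi I \<psi> I b" if "0 \<le> a" "a < b" for a b
      using upI that unfolding in_C_up_def strict_mono_on_def by auto
    have Ck2: "Ck 2 (ext0 (\<lambda>u. integral {0..u} (\<rho> i)))" if i: "i \<in> {1..I}" for i
      using Cq i unfolding in_Cq_def \<psi>_def by blast
    have C1: "in_C1_plus (\<rho> i)" if i: "i \<in> {1..I}" for i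
      using Ck2[OF i] Ck_iff[OF cont[OF i]] nn[OF i] unfolding in_C1_plus_def by blast
    have rho0: "\<rho> i 0 = 0" if i: "i \<in> {1..I}" for i
      using Ck2[OF i] Ck2_eq ext0_diff0[OF cont[OF i]] by blast
    have Pdiff: "phi I \<psi> i b - phi I \<psi> i a > 0" if "i \<in> {1..I}" "0 \<le> a" "a < b" for i a b
      using phi_diff[of i a b] smono[of a b] that by force
    have Tnn: "\<forall>i\<in>{1..I}. T i \<ge> 0"
    proof
      fix i assume i: "i \<in> {1..I}"
      have "0 \<le> (\<psi> i 1 - \<psi> i 0) / (phi I \<psi> i 1 - phi I \<psi> i 0)"
        using psi_mono[OF i, of 0 1] Pdiff[OF i, of 0 1] by simp
      then have "ereal 0 \<le> ereal ((\<psi> i 1 - \<psi> i 0) / (phi I \<psi> i 1 - phi I \<psi> i 0))" by simp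
      also have "\<dots> \<le> T i" unfolding T_def
        by (rule SUP_upper2[where i="(1,0)"]) auto
      finally show "T i \<ge> 0" by (simp add: zero_ereal_def)
    qed
    obtain c where c: "\<forall>i\<in>{1..I}. T i = ereal (c i) \<and> c i \<ge> 0" and csum: "(\<Sum>i=1..I. real i * c i) < 1/2"
      using extract_c[OF Tnn sumT] by blast
    have Hmono: "c i * phi I \<psi> i a - \<psi> i a \<le> c i * phi I \<psi> i b - \<psi> i b"
      if i: "i \<in> {1..I}" and ab: "0 \<le> a" "a < b" for i a b
    proof -
      have "ereal ((\<psi> i (fst (b,a)) - \<psi> i (snd (b,a))) / (phi I \<psi> i (fst (b,a)) - phi I \<psi> i (snd (b,a)))) \<le> T i"
        unfolding T_def by (rule SUP_upper) (use ab in auto)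
      then have "(\<psi> i b - \<psi> i a) / (phi I \<psi> i b - phi I \<psi> i a) \<le> c i" using c i by simp
      then have "\<psi> i b - \<psi> i a \<le> c i * (phi I \<psi> i b - phi I \<psi> i a)"
        using Pdiff[OF i ab] by (simp add: pos_divide_le_eq mult.commute)
      then show ?thesis by (simp add: algebra_simps)
    qed
    have cbound: "\<rho> i u \<le> c i * d i u" if i: "i \<in> {1..I}" and u: "u \<ge> 0" for i u
    proof (cases "u = 0")
      case True
      have "d i 0 = 1" unfolding d_def using rho0 by simp
      then show ?thesis using True rho0[OF i] c i by simp
    next
      case False
      then have u0: "u > 0" using u by simp
      have "((\<lambda>u. c i * phi I \<psi> i u - \<psi> i u) has_real_derivative c i * d i u - \<rho> i u) (at u within {0..})"
        by (intro DERIV_diff DERIV_cmult) (use Dphi Dpsi[OF i] u in auto)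
      then have "((\<lambda>u. c i * phi I \<psi> i u - \<psi> i u) has_real_derivative c i * d i u - \<rho> i u) (at u)"
        by (rule deriv_within_at[OF _ u0])
      then have "c i * d i u - \<rho> i u \<ge> 0"
        by (rule mono_deriv_nonneg[OF _ u0]) (use Hmono[OF i] in auto)
      then show ?thesis by simp
    qed
    define \<delta> where "\<delta> = 1 - 2 * (\<Sum>i=1..I. real i * c i)"
    have \<delta>pos: "\<delta> > 0" using csum \<delta>_def by simp
    have dpos: "d I u > 0" if "u \<ge> 0" for u
      using key[of c u] c cbound that \<delta>pos unfolding \<delta>_def by fastforce
    have dipos: "d i u > 0" if "i \<in> {1..I}" "u \<ge> 0" for i u
      using dpos[OF that(2)] d_le[of i u] that by force
    define S where "S i = (SUP u\<in>{0::real..}. ereal (\<rho> i u / d i u))" for i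
    have Sle: "S i \<le> ereal (c i)" if i: "i \<in> {1..I}" for i
      unfolding S_def
    proof (rule SUP_least)
      fix u :: real assume "u \<in> {0..}"
      then have u: "u \<ge> 0" by simp
      show "ereal (\<rho> i u / d i u) \<le> ereal (c i)"
        using cbound[OF i u] dipos[OF i u] by (simp add: pos_divide_le_eq mult.commute)
    qed
    have "(\<Sum>i=1..I. ereal (real i) * S i) \<le> (\<Sum>i=1..I. ereal (real i) * ereal (c i))"
    proof (rule sum_mono)
      fix i assume i: "i \<in> {1..I}"
      show "ereal (real i) * S i \<le> ereal (real i) * ereal (c i)"
        by (rule ereal_mult_left_mono[OF Sle[OF i]]) simp
    qed
    also have "\<dots> = (\<Sum>i=1..I. ereal (real i * c i))" by simp
    also have "\<dots> = ereal (\<Sum>i=1..I. real i * c i)" by (rule sum_ereal)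
    also have "\<dots> < ereal (1/2)" using csum by simp
    finally have sumS: "(\<Sum>i=1..I. ereal (real i) * S i) < ereal (1/2)" .
    show "in_D_density I \<rho>"
      unfolding in_D_density_def
    proof (intro conjI)
      show "\<forall>i\<in>{1..I}. in_C1_plus (\<rho> i)" using C1 by blast
      show "\<forall>u\<ge>0. (\<Sum>i=1..I. 2 * real i * \<rho> i u) < 1" using dpos dI by auto
      show "(\<Sum>i=1..I. ereal (real i) * (SUP u\<in>{0::real..}.
           ereal (\<rho> i u / (1 - (\<Sum>j=1..I. 2 * real (min i j) * \<rho> j u))))) < ereal (1/2)"
        using sumS unfolding S_def d_def .
    qed
  qed
qed

end
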